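(* For all integers $n\ge 1$ and $k\ge 0$, the number of ordered (plane) trees with $n$ edges containing exactly $k$ nodes that are adjacent to a leaf equals \[\frac{1}{n+1}\binom{n+1}{2k+1}\binom{n+k}{k}.\] Consequently $C_n=\frac{1}{n+1}\sum_{k}\binom{n+1}{2k+1}\binom{n+k}{k}$.
   Context: In an ordered tree the vertices are partitioned into three classes: the root, the leaves (non-root vertices with no children), and the nodes (vertices that are neither the root nor a leaf). A node is adjacent to a leaf if at least one of its children is a leaf. $C_n$ denotes the $n$th Catalan number. *)

theory Defs
  imports Complex_Main
begin

datatype otree = Node "otree list"

fun edges :: "otree \<Rightarrow> nat" where
  "edges (Node ts) = length ts + sum_list (map edges ts)"

text \<open>Number of nodes adjacent to a leaf in the subtree rooted at a NON-root vertex
  (the vertex itself is counted if it is a node, i.e. has children, and some child is a leaf).\<close>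
fun adj_sub :: "otree \<Rightarrow> nat" where
  "adj_sub (Node ts) =
     (if ts \<noteq> [] \<and> (\<exists>c\<in>set ts. c = Node []) then 1 else 0) + sum_list (map adj_sub ts)"

text \<open>Number of nodes (non-root, non-leaf vertices) adjacent to a leaf in a tree; the root is excluded.\<close>
fun leaf_adj_nodes :: "otree \<Rightarrow> nat" where
  "leaf_adj_nodes (Node ts) = sum_list (map adj_sub ts)"

definition catalan :: "nat \<Rightarrow> nat" where
  "catalan n = ((2 * n) choose n) div (n + 1)"

end

theory Submission
  imports Defs
begin


abbreviation lf :: otree where "lf \<equiv> Node []"

fun kids :: "otree \<Rightarrow> otree list" where "kids (Node ts) = ts"

lemma Node_kids[simp]: "Node (kids t) = t" by (cases t) auto

fun chiM :: "otree list \<Rightarrow> otree list \<times> otree list" where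
  "chiM [] = ([], [])"
| "chiM (Node cs # rest) = (if lf \<in> set cs then (rest, cs)
      else (case chiM cs of (w, l) \<Rightarrow> (rest @ lf # w, l)))"

lemma len_tl_dw: "x \<in> set w \<Longrightarrow> \<not> P x \<Longrightarrow> length (tl (dropWhile P w)) < length w"
proof -
  assume "x \<in> set w" "\<not> P x"
  then have ne: "dropWhile P w \<noteq> []" by (auto simp: dropWhile_eq_Nil_conv)
  have "length (dropWhile P w) \<le> length w" by (rule length_dropWhile_le)
  then show ?thesis using ne by (cases "dropWhile P w") auto
qed

lemma len_tl_dw2: "x \<in> set w \<Longrightarrow> length (dropWhile (\<lambda>y. y \<noteq> x) w) - Suc 0 < length w"
proof -
  assume x: "x \<in> set w"
  then have ne: "dropWhile (\<lambda>y. y \<noteq> x) w \<noteq> []" by (auto simp: dropWhile_eq_Nil_conv)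
  then have "length (dropWhile (\<lambda>y. y \<noteq> x) w) > 0" by simp
  moreover have "length (dropWhile (\<lambda>y. y \<noteq> x) w) \<le> length w" by (rule length_dropWhile_le)
  ultimately show ?thesis by linarith
qed

function psiM :: "otree list \<Rightarrow> otree list \<Rightarrow> otree list" where
  "psiM w l = (if lf \<notin> set w then Node l # w
     else Node (psiM (tl (dropWhile (\<lambda>x. x \<noteq> lf) w)) l) # takeWhile (\<lambda>x. x \<noteq> lf) w)"
  by auto
termination
  apply (relation "measure (\<lambda>(w, l). length w)")
  by (auto dest: len_tl_dw2)

declare psiM.simps[simp del]

lemma edges_append: "edges (Node (xs @ ys)) = edges (Node xs) + edges (Node ys)"
  by simp
lemma lan_append: "leaf_adj_nodes (Node (xs @ ys)) = leaf_adj_nodes (Node xs) + leaf_adj_nodes (Node ys)"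
  by simp

lemma split_lf:
  assumes "lf \<in> set cs"
  shows "cs = takeWhile (\<lambda>x. x \<noteq> lf) cs @ lf # tl (dropWhile (\<lambda>x. x \<noteq> lf) cs)"
    and "lf \<notin> set (takeWhile (\<lambda>x. x \<noteq> lf) cs)"
proof -
  have "dropWhile (\<lambda>x. x \<noteq> lf) cs \<noteq> []" using assms by (simp add: dropWhile_eq_Nil_conv)
  moreover have "hd (dropWhile (\<lambda>x. x \<noteq> lf) cs) = lf" using assms
    by (metis (mono_tags, lifting) calculation hd_dropWhile)
  ultimately have "dropWhile (\<lambda>x. x \<noteq> lf) cs = lf # tl (dropWhile (\<lambda>x. x \<noteq> lf) cs)"
    by (metis list.exhaust_sel)
  then show "cs = takeWhile (\<lambda>x. x \<noteq> lf) cs @ lf # tl (dropWhile (\<lambda>x. x \<noteq> lf) cs)"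
    by (metis takeWhile_dropWhile_id)
  show "lf \<notin> set (takeWhile (\<lambda>x. x \<noteq> lf) cs)"
    by (metis (mono_tags, lifting) set_takeWhileD)
qed

lemma tw_lf: "lf \<notin> set A \<Longrightarrow> takeWhile (\<lambda>x. x \<noteq> lf) (A @ lf # B) = A"
  by (induction A) auto
lemma dw_lf: "lf \<notin> set A \<Longrightarrow> dropWhile (\<lambda>x. x \<noteq> lf) (A @ lf # B) = lf # B"
  by (induction A) auto

lemma chiM_props:
  "cs \<noteq> [] \<Longrightarrow> lf \<notin> set cs \<Longrightarrow> chiM cs = (w, l) \<Longrightarrow>
    lf \<in> set l \<and> psiM w l = cs \<and> edges (Node w) + edges (Node l) + 1 = edges (Node cs)
    \<and> leaf_adj_nodes (Node w) + leaf_adj_nodes (Node l) + 1 = leaf_adj_nodes (Node cs)"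
proof (induction cs arbitrary: w l rule: chiM.induct)
  case 1
  then show ?case by simp
next
  case (2 cs rest)
  show ?case
  proof (cases "lf \<in> set cs")
    case True
    then have "cs \<noteq> []" by auto
    with True 2(2-4) show ?thesis by (auto simp: psiM.simps)
  next
    case False
    obtain w' l' where wl: "chiM cs = (w', l')" by fastforce
    have cs: "cs \<noteq> []" using 2(3) by auto
    from 2(1)[OF False cs False wl] have IH: "lf \<in> set l' \<and> psiM w' l' = cs \<and>
      edges (Node w') + edges (Node l') + 1 = edges (Node cs) \<and>
      leaf_adj_nodes (Node w') + leaf_adj_nodes (Node l') + 1 = leaf_adj_nodes (Node cs)" .
    have rest: "lf \<notin> set rest" using 2(3) by auto
    have w: "w = rest @ lf # w'" and l: "l = l'" using 2(4) False wl by auto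
    have tw: "takeWhile (\<lambda>x. x \<noteq> lf) (rest @ lf # w') = rest"
      using rest by (rule tw_lf)
    have dw: "dropWhile (\<lambda>x. x \<noteq> lf) (rest @ lf # w') = lf # w'"
      using rest by (rule dw_lf)
    have "psiM w l = Node (psiM w' l') # rest"
      by (subst psiM.simps) (simp add: w l tw dw)
    then show ?thesis using IH False cs by (simp add: w l)
  qed
qed

lemma psiM_props:
  "lf \<in> set l \<Longrightarrow> psiM w l \<noteq> [] \<and> lf \<notin> set (psiM w l) \<and> chiM (psiM w l) = (w, l)"
proof (induction w l rule: psiM.induct)
  case (1 w l)
  show ?case
  proof (cases "lf \<in> set w")
    case False
    have "l \<noteq> []" using 1(2) by auto
    have eq: "psiM w l = Node l # w" by (subst psiM.simps) (simp add: False)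
    show ?thesis using False 1(2) \<open>l \<noteq> []\<close> by (simp add: eq)
  next
    case True
    define r where "r = takeWhile (\<lambda>x. x \<noteq> lf) w"
    define ws where "ws = tl (dropWhile (\<lambda>x. x \<noteq> lf) w)"
    have wsplit: "w = r @ lf # ws" and rl: "lf \<notin> set r"
      using split_lf[OF True] by (simp_all add: r_def ws_def)
    have IH: "psiM ws l \<noteq> [] \<and> lf \<notin> set (psiM ws l) \<and> chiM (psiM ws l) = (ws, l)"
      using 1(1) True 1(2) by (simp add: ws_def)
    have eq: "psiM w l = Node (psiM ws l) # r"
      by (subst psiM.simps) (simp add: True r_def ws_def)
    obtain p where p: "psiM ws l = p" by auto
    show ?thesis unfolding eq using IH rl p by (auto simp: wsplit)
  qed
qed

datatype dcase = DLeaf | DOne otree | DThree otree otree otree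

fun dec :: "otree \<Rightarrow> dcase" where
  "dec (Node []) = DLeaf"
| "dec (Node (Node cs # rest)) = (if cs = [] then DOne (Node rest)
     else if lf \<in> set cs then DThree (Node (takeWhile (\<lambda>x. x \<noteq> lf) cs))
                  (Node (tl (dropWhile (\<lambda>x. x \<noteq> lf) cs))) (Node rest)
     else (case chiM cs of (w, l) \<Rightarrow> DThree (Node l) (Node w) (Node rest)))"

fun enc :: "dcase \<Rightarrow> otree" where
  "enc DLeaf = lf"
| "enc (DOne t) = Node (lf # kids t)"
| "enc (DThree p q s) = Node ((if lf \<notin> set (kids p) then Node (kids p @ lf # kids q)
      else Node (psiM (kids q) (kids p))) # kids s)"

lemma enc_dec: "enc (dec t) = t"
proof (cases t)
  case (Node ts)
  show ?thesis
  proof (cases ts)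
    case Nil then show ?thesis using Node by simp
  next
    case (Cons c rest)
    obtain cs where c: "c = Node cs" by (cases c)
    show ?thesis
    proof (cases "cs = []")
      case True then show ?thesis using Node Cons c by simp
    next
      case ne: False
      show ?thesis
      proof (cases "lf \<in> set cs")
        case True
        note sp = split_lf[OF True]
        show ?thesis using Node Cons c ne True sp by (simp del: takeWhile_eq_all_conv)
      next
        case False
        obtain w l where wl: "chiM cs = (w, l)" by fastforce
        note pr = chiM_props[OF ne False wl]
        show ?thesis using Node Cons c ne False wl pr by simp
      qed
    qed
  qed
qed

lemma dec_enc: "dec (enc d) = d"
proof (cases d)
  case DLeaf then show ?thesis by simp
next
  case (DOne t) then show ?thesis by simp
next
  case (DThree p q s)
  show ?thesis
  proof (cases "lf \<in> set (kids p)")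
    case False
    have tw: "takeWhile (\<lambda>x. x \<noteq> lf) (kids p @ lf # kids q) = kids p"
      using False by (rule tw_lf)
    have dw: "dropWhile (\<lambda>x. x \<noteq> lf) (kids p @ lf # kids q) = lf # kids q"
      using False by (rule dw_lf)
    show ?thesis using DThree False tw dw by simp
  next
    case True
    note pr = psiM_props[OF True, of "kids q"]
    then show ?thesis using DThree True
      by (cases "psiM (kids q) (kids p)") auto
  qed
qed



lemma dec_DLeaf: "dec t = DLeaf \<Longrightarrow> t = lf"
  by (metis enc.simps(1) enc_dec)

lemma dec_stats:
  "dec t = DThree p q s \<Longrightarrow> edges t = edges p + edges q + edges s + 2 \<and>
     leaf_adj_nodes t = leaf_adj_nodes p + leaf_adj_nodes q + leaf_adj_nodes s + 1"
proof (cases t)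
  case (Node ts)
  assume d: "dec t = DThree p q s"
  show ?thesis
  proof (cases ts)
    case Nil then show ?thesis using Node d by simp
  next
    case (Cons c rest)
    obtain cs where c: "c = Node cs" by (cases c)
    show ?thesis
    proof (cases "cs = []")
      case True then show ?thesis using Node Cons c d by simp
    next
      case ne: False
      show ?thesis
      proof (cases "lf \<in> set cs")
        case True
        note sp = split_lf[OF True]
        define A where "A = takeWhile (\<lambda>x. x \<noteq> lf) cs"
        define B where "B = tl (dropWhile (\<lambda>x. x \<noteq> lf) cs)"
        have cs: "cs = A @ lf # B" using sp(1) by (simp add: A_def B_def)
        have pqs: "p = Node A" "q = Node B" "s = Node rest"
          using d Node Cons c ne True by (simp_all add: A_def B_def)
        show ?thesis using ne True unfolding Node Cons c pqs by (simp add: cs)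
      next
        case False
        obtain w l where wl: "chiM cs = (w, l)" by fastforce
        note pr = chiM_props[OF ne False wl]
        have pqs: "p = Node l" "q = Node w" "s = Node rest"
          using d Node Cons c ne False wl by simp_all
        show ?thesis using ne False pr unfolding Node Cons c pqs by simp
      qed
    qed
  qed
qed

lemma dec_DOne: "dec t = DOne t' \<Longrightarrow> edges t = edges t' + 1 \<and> leaf_adj_nodes t = leaf_adj_nodes t'"
proof -
  assume "dec t = DOne t'"
  then have t: "t = Node (lf # kids t')" by (metis enc.simps(2) enc_dec)
  obtain ys where "t' = Node ys" by (cases t')
  then show ?thesis using t by simp
qed

lemma enc_stats:
  "edges (enc (DOne t)) = edges t + 1" "leaf_adj_nodes (enc (DOne t)) = leaf_adj_nodes t"
  "edges (enc (DThree p q s)) = edges p + edges q + edges s + 2"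
  "leaf_adj_nodes (enc (DThree p q s)) = leaf_adj_nodes p + leaf_adj_nodes q + leaf_adj_nodes s + 1"
  using dec_DOne[OF dec_enc[of "DOne t"]] dec_stats[OF dec_enc[of "DThree p q s"]] by auto

definition Fs :: "nat \<Rightarrow> nat \<Rightarrow> nat \<Rightarrow> otree list set" where
  "Fs r n k = {xs. length xs = r \<and> sum_list (map edges xs) = n \<and> sum_list (map leaf_adj_nodes xs) = k}"

lemma fin_edges: "finite {t. edges t \<le> n}"
proof (induction n)
  case 0
  have "{t. edges t \<le> 0} \<subseteq> {lf}"
  proof
    fix t assume "t \<in> {t. edges t \<le> 0}"
    then show "t \<in> {lf}" by (cases t) auto
  qed
  then show ?case using finite_subset by blast
next
  case (Suc n)
  have "{t. edges t \<le> Suc n} \<subseteq> Node ` {xs. set xs \<subseteq> {t. edges t \<le> n} \<and> length xs \<le> Suc n}"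
  proof
    fix t assume "t \<in> {t. edges t \<le> Suc n}"
    then obtain xs where t: "t = Node xs" and le: "length xs + sum_list (map edges xs) \<le> Suc n"
      by (cases t) auto
    have "set xs \<subseteq> {t. edges t \<le> n}"
    proof
      fix x assume x: "x \<in> set xs"
      then have "edges x \<le> sum_list (map edges xs)" by (simp add: member_le_sum_list)
      moreover have "length xs \<ge> 1" using x by (cases xs) auto
      ultimately show "x \<in> {t. edges t \<le> n}" using le by auto
    qed
    then show "t \<in> Node ` {xs. set xs \<subseteq> {t. edges t \<le> n} \<and> length xs \<le> Suc n}"
      using t le by auto
  qed
  moreover have "finite (Node ` {xs. set xs \<subseteq> {t. edges t \<le> n} \<and> length xs \<le> Suc n})"
    using finite_lists_length_le[OF Suc.IH] by blast
  ultimately show ?case using finite_subset by blast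
qed

lemma fin_Fs: "finite (Fs r n k)"
proof -
  have "Fs r n k \<subseteq> {xs. set xs \<subseteq> {t. edges t \<le> n} \<and> length xs = r}"
    unfolding Fs_def by (auto simp: member_le_sum_list)
  then show ?thesis using finite_lists_length_eq[OF fin_edges] finite_subset by blast
qed



definition G2 :: "nat \<Rightarrow> nat \<Rightarrow> nat \<Rightarrow> otree list set" where
  "G2 r n k = {xs. length xs = Suc r \<and> sum_list (map edges xs) + 1 = n \<and> sum_list (map leaf_adj_nodes xs) = k}"
definition G3 :: "nat \<Rightarrow> nat \<Rightarrow> nat \<Rightarrow> otree list set" where
  "G3 r n k = {xs. length xs = r + 3 \<and> sum_list (map edges xs) + 2 = n \<and> sum_list (map leaf_adj_nodes xs) + 1 = k}"

definition m2 :: "otree list \<Rightarrow> otree list" where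
  "m2 ys = enc (DOne (hd ys)) # tl ys"
definition m3 :: "otree list \<Rightarrow> otree list" where
  "m3 ys = enc (DThree (ys!0) (ys!1) (ys!2)) # drop 3 ys"

lemma len3: "length ys = r + 3 \<Longrightarrow> \<exists>p q s ts. ys = p # q # s # ts"
  by (auto simp: numeral_3_eq_3 length_Suc_conv)

lemma G2_eq: "G2 r n k = (if n \<ge> 1 then Fs (Suc r) (n - 1) k else {})"
  unfolding G2_def Fs_def by auto
lemma G3_eq: "G3 r n k = (if n \<ge> 2 \<and> k \<ge> 1 then Fs (r + 3) (n - 2) (k - 1) else {})"
  unfolding G3_def Fs_def by auto

lemma fin_G2: "finite (G2 r n k)" by (simp add: G2_eq fin_Fs)
lemma fin_G3: "finite (G3 r n k)" by (simp add: G3_eq fin_Fs)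

lemma Fs_split: "Fs (Suc r) n k = (\<lambda>ys. lf # ys) ` Fs r n k \<union> m2 ` G2 r n k \<union> m3 ` G3 r n k"
proof (rule set_eqI, rule iffI)
  fix xs assume xs: "xs \<in> Fs (Suc r) n k"
  then obtain t ts where xt: "xs = t # ts" unfolding Fs_def by (cases xs) auto
  show "xs \<in> (\<lambda>ys. lf # ys) ` Fs r n k \<union> m2 ` G2 r n k \<union> m3 ` G3 r n k"
  proof (cases "dec t")
    case DLeaf
    then have "t = lf" by (rule dec_DLeaf)
    then have "ts \<in> Fs r n k" using xs xt unfolding Fs_def by simp
    then show ?thesis using xt \<open>t = lf\<close> by blast
  next
    case (DOne t')
    note st = dec_DOne[OF DOne]
    have "t' # ts \<in> G2 r n k" using xs xt st unfolding Fs_def G2_def by simp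
    moreover have "t = enc (DOne t')" using enc_dec[of t] DOne by (simp del: enc.simps)
    then have "xs = m2 (t' # ts)" unfolding m2_def using xt by (simp del: enc.simps)
    ultimately show ?thesis by blast
  next
    case (DThree p q s)
    note st = dec_stats[OF DThree]
    have "p # q # s # ts \<in> G3 r n k" using xs xt st unfolding Fs_def G3_def by simp
    moreover have "t = enc (DThree p q s)" using enc_dec[of t] DThree by (simp del: enc.simps)
    then have "xs = m3 (p # q # s # ts)" unfolding m3_def using xt by (simp del: enc.simps)
    ultimately show ?thesis by blast
  qed
next
  fix xs assume "xs \<in> (\<lambda>ys. lf # ys) ` Fs r n k \<union> m2 ` G2 r n k \<union> m3 ` G3 r n k"
  then consider (a) ys where "ys \<in> Fs r n k" "xs = lf # ys"
    | (b) ys where "ys \<in> G2 r n k" "xs = m2 ys"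
    | (c) ys where "ys \<in> G3 r n k" "xs = m3 ys" by blast
  then show "xs \<in> Fs (Suc r) n k"
  proof cases
    case a then show ?thesis unfolding Fs_def by simp
  next
    case b
    then obtain t ts where ys: "ys = t # ts" unfolding G2_def by (cases ys) auto
    show ?thesis using b unfolding ys m2_def Fs_def G2_def by (simp add: enc_stats del: enc.simps)
  next
    case c
    then obtain p q s ts where ys: "ys = p # q # s # ts" unfolding G3_def
      using len3 by blast
    show ?thesis using c unfolding ys m3_def Fs_def G3_def by (simp add: enc_stats del: enc.simps)
  qed
qed

lemma inj_m2: "inj_on m2 (G2 r n k)"
proof (rule inj_onI)
  fix xs ys assume "xs \<in> G2 r n k" "ys \<in> G2 r n k" and e: "m2 xs = m2 ys"
  then obtain a as b bs where xy: "xs = a # as" "ys = b # bs" unfolding G2_def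
    by (auto simp: length_Suc_conv)
  have "kids a = kids b" "as = bs" using e unfolding m2_def xy by auto
  then have "a = b" "as = bs" by (metis Node_kids)+
  then show "xs = ys" using xy by simp
qed

lemma inj_m3: "inj_on m3 (G3 r n k)"
proof (rule inj_onI)
  fix xs ys assume x: "xs \<in> G3 r n k" and y: "ys \<in> G3 r n k" and e: "m3 xs = m3 ys"
  obtain p q s ts where xs: "xs = p # q # s # ts" using x unfolding G3_def
    using len3 by blast
  obtain p' q' s' ts' where ys: "ys = p' # q' # s' # ts'" using y unfolding G3_def
    using len3 by blast
  have "enc (DThree p q s) = enc (DThree p' q' s')" using e unfolding xs ys m3_def by (simp del: enc.simps)
  then have "dec (enc (DThree p q s)) = dec (enc (DThree p' q' s'))" by (rule arg_cong)
  then have "DThree p q s = DThree p' q' s'" by (simp only: dec_enc)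
  then show "xs = ys" using e unfolding xs ys m3_def by simp
qed

lemma card_Fs_Suc: "card (Fs (Suc r) n k) = card (Fs r n k) + card (G2 r n k) + card (G3 r n k)"
proof -
  have h1: "\<And>x. x \<in> (\<lambda>ys. lf # ys) ` Fs r n k \<Longrightarrow> dec (hd x) = DLeaf" by auto
  have h2: "\<And>x. x \<in> m2 ` G2 r n k \<Longrightarrow> \<exists>t. dec (hd x) = DOne t"
    unfolding m2_def by (auto simp: dec_enc simp del: enc.simps)
  have h3: "\<And>x. x \<in> m3 ` G3 r n k \<Longrightarrow> \<exists>p q s. dec (hd x) = DThree p q s"
    unfolding m3_def by (auto simp: dec_enc simp del: enc.simps)
  have d1: "(\<lambda>ys. lf # ys) ` Fs r n k \<inter> m2 ` G2 r n k = {}"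
  proof (rule equals0I)
    fix x assume "x \<in> (\<lambda>ys. lf # ys) ` Fs r n k \<inter> m2 ` G2 r n k"
    then have x1: "x \<in> (\<lambda>ys. lf # ys) ` Fs r n k" and x2: "x \<in> m2 ` G2 r n k" by (rule IntD1, rule IntD2)
    have "dec (hd x) = DLeaf" by (rule h1[OF x1])
    moreover have "\<exists>t. dec (hd x) = DOne t" by (rule h2[OF x2])
    ultimately show False by auto
  qed
  have d2: "((\<lambda>ys. lf # ys) ` Fs r n k \<union> m2 ` G2 r n k) \<inter> m3 ` G3 r n k = {}"
  proof (rule equals0I)
    fix x assume x: "x \<in> ((\<lambda>ys. lf # ys) ` Fs r n k \<union> m2 ` G2 r n k) \<inter> m3 ` G3 r n k"
    then have x1: "x \<in> (\<lambda>ys. lf # ys) ` Fs r n k \<union> m2 ` G2 r n k" and x2: "x \<in> m3 ` G3 r n k"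
      by (rule IntD1, rule IntD2)
    have "\<exists>p q s. dec (hd x) = DThree p q s" by (rule h3[OF x2])
    moreover have "dec (hd x) = DLeaf \<or> (\<exists>t. dec (hd x) = DOne t)"
    proof (cases "x \<in> (\<lambda>ys. lf # ys) ` Fs r n k")
      case True then show ?thesis using h1 by blast
    next
      case False then have "x \<in> m2 ` G2 r n k" using x1 by blast
      then show ?thesis using h2 by blast
    qed
    ultimately show False by auto
  qed
  have "card (Fs (Suc r) n k) = card ((\<lambda>ys. lf # ys) ` Fs r n k \<union> m2 ` G2 r n k) + card (m3 ` G3 r n k)"
    unfolding Fs_split by (rule card_Un_disjoint) (auto simp: fin_Fs fin_G2 fin_G3 d2)
  also have "\<dots> = card ((\<lambda>ys. lf # ys) ` Fs r n k) + card (m2 ` G2 r n k) + card (m3 ` G3 r n k)"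
    by (subst card_Un_disjoint) (auto simp: fin_Fs fin_G2 d1)
  also have "\<dots> = card (Fs r n k) + card (G2 r n k) + card (G3 r n k)"
    by (simp add: card_image[OF inj_m2] card_image[OF inj_m3] card_image inj_on_def)
  finally show ?thesis .
qed



definition Rn :: "nat \<Rightarrow> nat \<Rightarrow> nat \<Rightarrow> real" where
  "Rn p r k = (if r = 0 then (if k = 0 then 1 else 0)
     else real r / real (p * k + r) * real ((p * k + r) choose k))"

lemma Rn_0: "r \<ge> 1 \<Longrightarrow> Rn p r 0 = 1"
  unfolding Rn_def by auto

lemma aux_field:
  fixes m t p j c :: real
  assumes m: "m > 0" and key: "(t+1)*m = t*(m-j) + (t+p)*(j+1)"
  shows "(t+1)/(m+1)*c = t/m*((m-j)*c/(m+1)) + (t+p)/m*((j+1)*c/(m+1))"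
proof -
  have nz: "m + 1 \<noteq> 0" "m \<noteq> 0" using m by auto
  have "t/m*((m-j)*c/(m+1)) + (t+p)/m*((j+1)*c/(m+1)) = c/(m*(m+1)) * (t*(m-j) + (t+p)*(j+1))"
    using nz by (simp add: divide_simps; simp add: algebra_simps)
  also have "\<dots> = c/(m*(m+1)) * ((t+1)*m)" by (simp only: key)
  also have "\<dots> = (t+1)/(m+1)*c" using nz by (simp add: divide_simps; simp add: algebra_simps)
  finally show ?thesis by simp
qed

lemma Rn_rec:
  assumes p: "p \<ge> 1"
  shows "Rn p (Suc t) (Suc j) = Rn p t (Suc j) + Rn p (t + p) j"
proof -
  define M where "M = p * Suc j + t"
  have M1: "p * Suc j + Suc t = Suc M" unfolding M_def by simp
  have M2: "p * j + (t + p) = M" unfolding M_def by simp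
  have M3: "p * Suc j + t = M" unfolding M_def by simp
  have "1 * Suc j \<le> p * Suc j" using p by (rule mult_le_mono1)
  then have Mj: "M \<ge> Suc j" unfolding M_def by simp
  define c where "c = real (Suc M choose Suc j)"
  define a where "a = real (M choose Suc j)"
  define b where "b = real (M choose j)"
  have hb: "real (Suc M) * b = real (Suc j) * c"
  proof -
    have hb0: "Suc j * (Suc M choose Suc j) = Suc M * (M choose j)" by (rule Suc_times_binomial)
    show ?thesis unfolding b_def c_def by (simp only: of_nat_mult[symmetric] hb0)
  qed
  have ha0: "(Suc M - Suc j) * (Suc M choose Suc j) = Suc M * (M choose Suc j)"
    using binomial_absorb_comp[of "Suc M" "Suc j"] by simp
  have ha: "real (Suc M) * a = (real M - real j) * c"
  proof -
    have dj: "real (Suc M - Suc j) = real M - real j" using Mj by (simp add: of_nat_diff)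
    have "real (Suc M - Suc j) * c = real (Suc M) * a"
      unfolding a_def c_def by (simp only: of_nat_mult[symmetric] ha0)
    then show ?thesis using dj by simp
  qed
  have l1: "Rn p t (Suc j) = real t / real M * a"
    unfolding Rn_def a_def M3 by simp
  have l2: "Rn p (t + p) j = real (t + p) / real M * b"
    unfolding Rn_def b_def M2 using p by simp
  have l0: "Rn p (Suc t) (Suc j) = real (Suc t) / real (Suc M) * c"
    unfolding Rn_def c_def M1 by simp
  have Mpos: "real M > 0" using Mj by simp
  have aa: "a = (real M - real j) * c / real (Suc M)" using ha by (simp add: field_simps)
  have bb: "b = real (Suc j) * c / real (Suc M)" using hb by (simp add: field_simps)
  have Mr: "real M = real p * (real j + 1) + real t" unfolding M_def by (simp add: algebra_simps)
  have key: "(real t+1)*real M = real t*(real M-real j) + (real t+real p)*(real j+1)"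
    by (simp add: Mr algebra_simps)
  show ?thesis unfolding l0 l1 l2 aa bb using aux_field[OF Mpos key, of c] by (simp add: algebra_simps)
qed

lemma Rn_k0[simp]: "Rn p r 0 = 1"
  unfolding Rn_def by auto

lemma Rn_0k: "k \<ge> 1 \<Longrightarrow> Rn p 0 k = 0"
  unfolding Rn_def by auto

definition fc :: "nat \<Rightarrow> nat \<Rightarrow> nat \<Rightarrow> real" where
  "fc r n k = (if 2 * k \<le> n then Rn 3 r k * real ((n - 2 * k + 3 * k + r - 1) choose (n - 2 * k)) else 0)"

lemma fc_0: "fc 0 n k = (if n = 0 \<and> k = 0 then 1 else 0)"
proof (cases "k = 0")
  case True
  then show ?thesis unfolding fc_def by (cases n) auto
next
  case False
  then show ?thesis unfolding fc_def using Rn_0k[of k 3] by auto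
qed

lemma pas: "N \<ge> 1 \<or> m = 0 \<Longrightarrow>
  real (N choose m) = real ((N - 1) choose m) + (if m \<ge> 1 then real ((N - 1) choose (m - 1)) else 0)"
  by (cases N; cases m) auto

lemma fc_rec: "fc (Suc s) n k = fc s n k + (if n \<ge> 1 then fc (Suc s) (n - 1) k else 0)
   + (if n \<ge> 2 \<and> k \<ge> 1 then fc (s + 3) (n - 2) (k - 1) else 0)"
proof (cases "2 * k \<le> n")
  case False
  then show ?thesis unfolding fc_def by auto
next
  case True
  define m where "m = n - 2 * k"
  have n: "n = m + 2 * k" using True unfolding m_def by simp
  have e0: "fc (Suc s) n k = Rn 3 (Suc s) k * real ((m + 3 * k + s) choose m)"
    unfolding fc_def n by simp
  have e1: "fc s n k = Rn 3 s k * real ((m + 3 * k + s - 1) choose m)"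
    unfolding fc_def n by simp
  have e2: "(if n \<ge> 1 then fc (Suc s) (n - 1) k else 0) =
     (if m \<ge> 1 then Rn 3 (Suc s) k * real ((m + 3 * k + s - 1) choose (m - 1)) else 0)"
  proof (cases m)
    case 0 then show ?thesis unfolding fc_def n by auto
  next
    case (Suc i)
    have "n - 1 = i + 2 * k" "n - 1 - 2 * k = i" "n \<ge> 1" using n Suc by auto
    then show ?thesis unfolding fc_def using Suc by simp
  qed
  have e3: "(if n \<ge> 2 \<and> k \<ge> 1 then fc (s + 3) (n - 2) (k - 1) else 0) =
     (if k \<ge> 1 then Rn 3 (s + 3) (k - 1) * real ((m + 3 * k + s - 1) choose m) else 0)"
  proof (cases k)
    case 0 then show ?thesis by simp
  next
    case (Suc j)
    have a: "n - 2 = m + 2 * j" "n - 2 - 2 * j = m" using n Suc by auto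
    have b: "m + 3 * j + (s + 3) - 1 = m + 3 * k + s - 1" using Suc by simp
    show ?thesis unfolding fc_def using Suc a b n by simp
  qed
  have P: "real ((m + 3 * k + s) choose m) = real ((m + 3 * k + s - 1) choose m)
      + (if m \<ge> 1 then real ((m + 3 * k + s - 1) choose (m - 1)) else 0)"
    by (rule pas) auto
  show ?thesis
  proof (cases k)
    case 0
    then show ?thesis unfolding e0 e1 e2 e3 P by (simp add: algebra_simps)
  next
    case (Suc j)
    have R: "Rn 3 (Suc s) k = Rn 3 s k + Rn 3 (s + 3) (k - 1)"
      using Rn_rec[of 3 s j] Suc by simp
    show ?thesis unfolding e0 e1 e2 e3 P R using Suc by (simp add: algebra_simps)
  qed
qed

lemma Rn2_rec: "Rn 2 (Suc s) n = Rn 2 s n + (if n \<ge> 1 then Rn 2 (s + 2) (n - 1) else 0)"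
proof (cases n)
  case 0 then show ?thesis by simp
next
  case (Suc j) then show ?thesis using Rn_rec[of 2 s j] by simp
qed



lemma card_Fs: "real (card (Fs r n k)) = fc r n k"
proof (induction "2 * n + r" arbitrary: r n k rule: less_induct)
  case less
  show ?case
  proof (cases r)
    case 0
    have "Fs 0 n k = (if n = 0 \<and> k = 0 then {[]} else {})" unfolding Fs_def by auto
    then show ?thesis using 0 by (simp add: fc_0)
  next
    case (Suc s)
    have IH1: "real (card (Fs s n k)) = fc s n k" using less Suc by simp
    have IH2: "n \<ge> 1 \<Longrightarrow> real (card (Fs (Suc s) (n - 1) k)) = fc (Suc s) (n - 1) k"
      using less Suc by simp
    have IH3: "n \<ge> 2 \<Longrightarrow> real (card (Fs (s + 3) (n - 2) (k - 1))) = fc (s + 3) (n - 2) (k - 1)"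
      using less Suc by simp
    have IH2': "n \<ge> 1 \<Longrightarrow> real (card (G2 s n k)) = fc (Suc s) (n - 1) k"
    proof -
      assume h: "n \<ge> 1"
      have eqG: "G2 s n k = Fs (Suc s) (n - 1) k" using h by (simp add: G2_eq)
      show ?thesis by (simp only: eqG IH2[OF h])
    qed
    have IH3': "n \<ge> 2 \<and> k \<ge> 1 \<Longrightarrow> real (card (G3 s n k)) = fc (s + 3) (n - 2) (k - 1)"
    proof -
      assume h: "n \<ge> 2 \<and> k \<ge> 1"
      have eqG: "G3 s n k = Fs (s + 3) (n - 2) (k - 1)" using h by (simp add: G3_eq)
      show ?thesis by (simp only: eqG IH3[OF conjunct1[OF h]])
    qed
    have "real (card (Fs (Suc s) n k)) = real (card (Fs s n k)) + real (card (G2 s n k)) + real (card (G3 s n k))"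
      by (simp add: card_Fs_Suc)
    also have "\<dots> = fc s n k + (if n \<ge> 1 then fc (Suc s) (n - 1) k else 0)
       + (if n \<ge> 2 \<and> k \<ge> 1 then fc (s + 3) (n - 2) (k - 1) else 0)"
    proof -
      have t2: "real (card (G2 s n k)) = (if n \<ge> 1 then fc (Suc s) (n - 1) k else 0)"
      proof (cases "n \<ge> 1")
        case True then show ?thesis using IH2'[OF True] by simp
      next
        case False then show ?thesis by (simp add: G2_eq)
      qed
      have t3: "real (card (G3 s n k)) = (if n \<ge> 2 \<and> k \<ge> 1 then fc (s + 3) (n - 2) (k - 1) else 0)"
      proof (cases "n \<ge> 2 \<and> k \<ge> 1")
        case True then show ?thesis using IH3'[OF True] by simp
      next
        case False then show ?thesis by (simp only: G3_eq False if_False card.empty of_nat_0)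
      qed
      show ?thesis by (simp only: t2 t3 IH1)
    qed
    also have "\<dots> = fc (Suc s) n k" by (rule fc_rec[symmetric])
    finally show ?thesis using Suc by simp
  qed
qed

lemma card_Tr: "real (card {t. edges t = n \<and> leaf_adj_nodes t = k}) = fc 1 n k"
proof -
  have "Fs 1 n k = (\<lambda>t. [t]) ` {t. edges t = n \<and> leaf_adj_nodes t = k}"
    unfolding Fs_def by (auto simp: length_Suc_conv)
  then have "card (Fs 1 n k) = card {t. edges t = n \<and> leaf_adj_nodes t = k}"
    by (simp add: card_image inj_on_def)
  then show ?thesis using card_Fs[of 1 n k] by simp
qed

lemma alg:
  fixes a b X Y P Q R Z :: real
  assumes "a \<noteq> 0" "b \<noteq> 0" "X \<noteq> 0" "Y \<noteq> 0" "P \<noteq> 0" "Q \<noteq> 0" "R \<noteq> 0"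
  shows "1 / a * (a * X / (P * Q)) * (Z / (R * X)) = 1 / b * (b * Y / (Q * R)) * (Z / (P * Y))"
  using assms by (simp add: field_simps)

lemma fc1: "fc 1 n k = 1 / real (n + 1) * real ((n + 1) choose (2 * k + 1)) * real ((n + k) choose k)"
proof (cases "2 * k \<le> n")
  case False
  have "(n + 1) choose (2 * k + 1) = 0" using False by (intro binomial_eq_0) simp
  then have z: "real ((n + 1) choose (2 * k + 1)) = 0" by (simp only: of_nat_0)
  have "fc 1 n k = 0" unfolding fc_def using False by simp
  then show ?thesis by (simp only: z mult_zero_right mult_zero_left)
next
  case True
  define m where "m = n - 2 * k"
  have n: "n = m + 2 * k" using True unfolding m_def by simp
  have l: "fc 1 n k = 1 / real (3 * k + 1) * real ((3 * k + 1) choose k) * real ((m + 3 * k) choose m)"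
    unfolding fc_def Rn_def n by (simp add: add.commute)
  have b1: "real ((3 * k + 1) choose k) = fact (3 * k + 1) / (fact k * fact (2 * k + 1))"
    by (subst binomial_fact) auto
  have b2: "real ((m + 3 * k) choose m) = fact (m + 3 * k) / (fact m * fact (3 * k))"
    by (subst binomial_fact) auto
  have b3: "real ((m + 2 * k + 1) choose (2 * k + 1)) = fact (m + 2 * k + 1) / (fact (2 * k + 1) * fact m)"
    by (subst binomial_fact) auto
  have b4: "real ((m + 2 * k + k) choose k) = fact (m + 3 * k) / (fact k * fact (m + 2 * k))"
  proof -
    have "m + 2 * k + k - k = m + 2 * k" "m + 2 * k + k = m + 3 * k" by simp_all
    then show ?thesis by (subst binomial_fact) (simp_all add: algebra_simps)
  qed
  have f1: "(fact (3 * k + 1) :: real) = real (3 * k + 1) * fact (3 * k)"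
    by (simp add: fact_Suc)
  have f2: "(fact (m + 2 * k + 1) :: real) = real (m + 2 * k + 1) * fact (m + 2 * k)"
    by (simp add: fact_Suc)
  show ?thesis unfolding l
    by (simp only: n b1 b2 b3 b4 f1 f2) (rule alg; simp)
qed



definition Gs :: "nat \<Rightarrow> nat \<Rightarrow> otree list set" where
  "Gs r n = {xs. length xs = r \<and> sum_list (map edges xs) = n}"

definition H2 :: "nat \<Rightarrow> nat \<Rightarrow> otree list set" where
  "H2 r n = {xs. length xs = r + 2 \<and> sum_list (map edges xs) + 1 = n}"

definition mm :: "otree list \<Rightarrow> otree list" where
  "mm ys = Node (ys ! 0 # kids (ys ! 1)) # drop 2 ys"

lemma fin_Gs: "finite (Gs r n)"
proof -
  have "Gs r n \<subseteq> {xs. set xs \<subseteq> {t. edges t \<le> n} \<and> length xs = r}"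
    unfolding Gs_def by (auto simp: member_le_sum_list)
  then show ?thesis using finite_lists_length_eq[OF fin_edges] finite_subset by blast
qed

lemma H2_eq: "H2 r n = (if n \<ge> 1 then Gs (r + 2) (n - 1) else {})"
  unfolding H2_def Gs_def by auto

lemma fin_H2: "finite (H2 r n)" by (simp add: H2_eq fin_Gs)

lemma len2: "length ys = r + 2 \<Longrightarrow> \<exists>c d ts. ys = c # d # ts"
  by (auto simp: numeral_2_eq_2 length_Suc_conv)

lemma Gs_split: "Gs (Suc r) n = (\<lambda>ys. lf # ys) ` Gs r n \<union> mm ` H2 r n"
proof (rule set_eqI, rule iffI)
  fix xs assume xs: "xs \<in> Gs (Suc r) n"
  then obtain t ts where xt: "xs = t # ts" unfolding Gs_def by (cases xs) auto
  obtain us where t: "t = Node us" by (cases t)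
  show "xs \<in> (\<lambda>ys. lf # ys) ` Gs r n \<union> mm ` H2 r n"
  proof (cases us)
    case Nil
    then have "ts \<in> Gs r n" using xs xt t unfolding Gs_def by simp
    then show ?thesis using xt t Nil by blast
  next
    case (Cons c cs)
    obtain d where d: "d = Node cs" by simp
    have "c # d # ts \<in> H2 r n" using xs xt t Cons d unfolding Gs_def H2_def by simp
    moreover have "xs = mm (c # d # ts)" unfolding mm_def using xt t Cons d by simp
    ultimately show ?thesis by blast
  qed
next
  fix xs assume "xs \<in> (\<lambda>ys. lf # ys) ` Gs r n \<union> mm ` H2 r n"
  then consider (a) ys where "ys \<in> Gs r n" "xs = lf # ys"
    | (b) ys where "ys \<in> H2 r n" "xs = mm ys" by blast
  then show "xs \<in> Gs (Suc r) n"
  proof cases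
    case a then show ?thesis unfolding Gs_def by simp
  next
    case b
    then obtain c d ts where ys: "ys = c # d # ts" unfolding H2_def using len2 by blast
    obtain ds where d: "d = Node ds" by (cases d)
    show ?thesis using b unfolding ys mm_def Gs_def H2_def d by simp
  qed
qed

lemma inj_mm: "inj_on mm (H2 r n)"
proof (rule inj_onI)
  fix xs ys assume x: "xs \<in> H2 r n" and y: "ys \<in> H2 r n" and e: "mm xs = mm ys"
  obtain c d ts where xs: "xs = c # d # ts" using x unfolding H2_def using len2 by blast
  obtain c' d' ts' where ys: "ys = c' # d' # ts'" using y unfolding H2_def using len2 by blast
  have "c = c'" "kids d = kids d'" "ts = ts'" using e unfolding xs ys mm_def by auto
  then have "d = d'" by (metis Node_kids)
  then show "xs = ys" using xs ys \<open>c = c'\<close> \<open>ts = ts'\<close> by simp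
qed

lemma card_Gs_Suc: "card (Gs (Suc r) n) = card (Gs r n) + card (H2 r n)"
proof -
  have d: "(\<lambda>ys. lf # ys) ` Gs r n \<inter> mm ` H2 r n = {}"
    unfolding mm_def by auto
  show ?thesis unfolding Gs_split
    by (subst card_Un_disjoint) (auto simp: fin_Gs fin_H2 d card_image[OF inj_mm] card_image inj_on_def)
qed

lemma card_Gs: "real (card (Gs r n)) = Rn 2 r n"
proof (induction "2 * n + r" arbitrary: r n rule: less_induct)
  case less
  show ?case
  proof (cases r)
    case 0
    have "Gs 0 n = (if n = 0 then {[]} else {})" unfolding Gs_def by auto
    then show ?thesis using 0 by (simp add: Rn_def)
  next
    case (Suc s)
    have IH1: "real (card (Gs s n)) = Rn 2 s n" using less Suc by simp
    have IH2: "n \<ge> 1 \<Longrightarrow> real (card (Gs (s + 2) (n - 1))) = Rn 2 (s + 2) (n - 1)"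
      using less Suc by simp
    have "real (card (Gs (Suc s) n)) = Rn 2 s n + (if n \<ge> 1 then Rn 2 (s + 2) (n - 1) else 0)"
    proof -
      have "card (Gs (Suc s) n) = card (Gs s n) + card (H2 s n)" by (rule card_Gs_Suc)
      then show ?thesis using IH1 IH2 by (simp add: H2_eq)
    qed
    also have "\<dots> = Rn 2 (Suc s) n" by (rule Rn2_rec[symmetric])
    finally show ?thesis using Suc by simp
  qed
qed

lemma card_trees: "real (card {t. edges t = n}) = real ((2 * n + 1) choose n) / real (2 * n + 1)"
proof -
  have "Gs 1 n = (\<lambda>t. [t]) ` {t. edges t = n}"
    unfolding Gs_def by (auto simp: length_Suc_conv)
  then have "card (Gs 1 n) = card {t. edges t = n}"
    by (simp add: card_image inj_on_def)
  then show ?thesis using card_Gs[of 1 n] by (simp add: Rn_def add.commute)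
qed

lemma catalan_eq: "catalan n = card {t. edges t = n}"
proof -
  define T where "T = card {t. edges t = n}"
  have s: "(2 * n + 1) choose n = (2 * n + 1) choose (n + 1)"
    using binomial_symmetric[of n "2 * n + 1"] by simp
  have h: "Suc (2 * n) * ((2 * n) choose n) = (Suc (2 * n) choose Suc n) * Suc n"
    by (rule Suc_times_binomial_eq)
  have h2: "(2 * n + 1) * ((2 * n) choose n) = ((2 * n + 1) choose n) * (n + 1)"
    using h s by simp
  have h3: "real (2 * n + 1) * real ((2 * n) choose n) = real ((2 * n + 1) choose n) * real (n + 1)"
    by (simp only: of_nat_mult[symmetric] h2)
  have tT: "real T = real ((2 * n + 1) choose n) / real (2 * n + 1)" using card_trees T_def by simp
  have nz: "real (2 * n + 1) \<noteq> 0" by simp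
  have "real ((2 * n) choose n) = real (n + 1) * real T"
    unfolding tT using h3 nz by (simp add: divide_simps mult.commute)
  then have "real ((2 * n) choose n) = real ((n + 1) * T)" by (simp add: algebra_simps)
  then have "(2 * n) choose n = (n + 1) * T" by (simp only: of_nat_eq_iff)
  then have "catalan n = ((n + 1) * T) div (n + 1)" unfolding catalan_def by (simp only:)
  also have "((n + 1) * T) div (n + 1) = T" by (rule nonzero_mult_div_cancel_left) simp
  finally show ?thesis unfolding T_def .
qed

lemma adj_le: "adj_sub t \<le> edges t"
proof (induction t)
  case (Node ts)
  have "sum_list (map adj_sub ts) \<le> sum_list (map edges ts)"
    using Node by (intro sum_list_mono) auto
  then show ?case by (cases ts) auto
qed

lemma lan_le: "leaf_adj_nodes t \<le> edges t"
proof (cases t)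
  case (Node ts)
  have "sum_list (map adj_sub ts) \<le> sum_list (map edges ts)"
    using adj_le by (intro sum_list_mono) auto
  then show ?thesis using Node by simp
qed

lemma fin_Tr: "finite {t. edges t = n \<and> leaf_adj_nodes t = k}"
  by (rule finite_subset[OF _ fin_edges[of n]]) auto

lemma card_split: "card {t. edges t = n} = (\<Sum>j\<le>n. card {t. edges t = n \<and> leaf_adj_nodes t = j})"
proof -
  have e: "{t. edges t = n} = (\<Union>j\<in>{..n}. {t. edges t = n \<and> leaf_adj_nodes t = j})"
    using lan_le by fastforce
  have "card (\<Union>j\<in>{..n}. {t. edges t = n \<and> leaf_adj_nodes t = j})
      = (\<Sum>j\<le>n. card {t. edges t = n \<and> leaf_adj_nodes t = j})"
    by (rule card_UN_disjoint) (auto simp: fin_Tr)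
  then show ?thesis using e by simp
qed

theorem mainTheorem2:
  fixes n k :: nat
  assumes "n \<ge> 1"
  shows "real (card {t. edges t = n \<and> leaf_adj_nodes t = k})
           = 1 / real (n + 1) * real ((n + 1) choose (2 * k + 1)) * real ((n + k) choose k)
       \<and> real (catalan n)
           = 1 / real (n + 1) * (\<Sum>j\<le>n. real ((n + 1) choose (2 * j + 1)) * real ((n + j) choose j))"
proof
  show "real (card {t. edges t = n \<and> leaf_adj_nodes t = k})
           = 1 / real (n + 1) * real ((n + 1) choose (2 * k + 1)) * real ((n + k) choose k)"
    using card_Tr fc1 by simp
  have "real (catalan n) = (\<Sum>j\<le>n. real (card {t. edges t = n \<and> leaf_adj_nodes t = j}))"
    unfolding catalan_eq card_split by simp
  also have "\<dots> = (\<Sum>j\<le>n. 1 / real (n + 1) * (real ((n + 1) choose (2 * j + 1)) * real ((n + j) choose j)))"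
    using card_Tr fc1 by (simp add: mult.assoc)
  also have "\<dots> = 1 / real (n + 1) * (\<Sum>j\<le>n. real ((n + 1) choose (2 * j + 1)) * real ((n + j) choose j))"
    by (simp add: sum_distrib_left)
  finally show "real (catalan n)
           = 1 / real (n + 1) * (\<Sum>j\<le>n. real ((n + 1) choose (2 * j + 1)) * real ((n + j) choose j))" .
qed

end
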